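(* For each positive integer $n\ge 4$, there exists a family of $n$ sidigraphs of order $4^n$ which are pairwise cospectral, each having only real eigenvalues, and each being strongly connected, non symmetric and non cycle balanced.
   Context: A sidigraph is a digraph (no loops, at most one arc from $u$ to $v$) with a sign $\pm1$ on each arc; its adjacency matrix has entry $\sigma(v_i,v_j)$ if there is an arc from $v_i$ to $v_j$ and $0$ otherwise, and its eigenvalues/spectrum are those of this matrix (spectrum as a multiset). Two sidigraphs are cospectral if they have the same spectrum. A sidigraph is strongly connected if its underlying digraph is. It is symmetric if whenever $(u,v)$ is an arc, $(v,u)$ is an arc with the same sign. The sign of a cycle is the product of the signs of its arcs; a sidigraph is cycle balanced if every directed cycle is positive, non cycle balanced otherwise. *)

theory Defs
  imports "Jordan_Normal_Form.Char_Poly" "HOL-Computational_Algebra.Fundamental_Theorem_Algebra"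
begin

text \<open>A sidigraph of order N: vertex set {0..<N}; the sign function
  s u v is 1 or -1 if there is an arc from u to v (with that sign), and 0 otherwise.
  No loops, at most one arc from u to v (automatic with this encoding).\<close>

definition sidigraph :: "nat \<Rightarrow> (nat \<Rightarrow> nat \<Rightarrow> int) \<Rightarrow> bool" where
  "sidigraph N s \<longleftrightarrow>
     (\<forall>u v. s u v \<in> {-1, 0, 1}) \<and>
     (\<forall>u. s u u = 0) \<and>
     (\<forall>u v. (u \<ge> N \<or> v \<ge> N) \<longrightarrow> s u v = 0)"

definition arc :: "(nat \<Rightarrow> nat \<Rightarrow> int) \<Rightarrow> nat \<Rightarrow> nat \<Rightarrow> bool" where
  "arc s u v \<longleftrightarrow> s u v \<noteq> 0"

definition adj_mat :: "nat \<Rightarrow> (nat \<Rightarrow> nat \<Rightarrow> int) \<Rightarrow> complex mat" where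
  "adj_mat N s = mat N N (\<lambda>(i, j). of_int (s i j))"

definition sd_spectrum :: "nat \<Rightarrow> (nat \<Rightarrow> nat \<Rightarrow> int) \<Rightarrow> complex multiset" where
  "sd_spectrum N s = proots (char_poly (adj_mat N s))"

definition cospectral :: "nat \<Rightarrow> (nat \<Rightarrow> nat \<Rightarrow> int) \<Rightarrow> (nat \<Rightarrow> nat \<Rightarrow> int) \<Rightarrow> bool" where
  "cospectral N s t \<longleftrightarrow> sd_spectrum N s = sd_spectrum N t"

definition real_spectrum :: "nat \<Rightarrow> (nat \<Rightarrow> nat \<Rightarrow> int) \<Rightarrow> bool" where
  "real_spectrum N s \<longleftrightarrow> (\<forall>z \<in># sd_spectrum N s. z \<in> \<real>)"

definition strongly_connected :: "nat \<Rightarrow> (nat \<Rightarrow> nat \<Rightarrow> int) \<Rightarrow> bool" where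
  "strongly_connected N s \<longleftrightarrow>
     (\<forall>u < N. \<forall>v < N. (u, v) \<in> {(x, y). arc s x y}\<^sup>*)"

definition symmetric_sd :: "(nat \<Rightarrow> nat \<Rightarrow> int) \<Rightarrow> bool" where
  "symmetric_sd s \<longleftrightarrow> (\<forall>u v. arc s u v \<longrightarrow> arc s v u \<and> s v u = s u v)"

definition dcycle :: "(nat \<Rightarrow> nat \<Rightarrow> int) \<Rightarrow> nat list \<Rightarrow> bool" where
  "dcycle s c \<longleftrightarrow> length c \<ge> 2 \<and> distinct c \<and>
     (\<forall>i < length c. arc s (c ! i) (c ! ((i + 1) mod length c)))"

definition cycle_sign :: "(nat \<Rightarrow> nat \<Rightarrow> int) \<Rightarrow> nat list \<Rightarrow> int" where
  "cycle_sign s c = (\<Prod>i < length c. s (c ! i) (c ! ((i + 1) mod length c)))"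

definition cycle_balanced :: "(nat \<Rightarrow> nat \<Rightarrow> int) \<Rightarrow> bool" where
  "cycle_balanced s \<longleftrightarrow> (\<forall>c. dcycle s c \<longrightarrow> cycle_sign s c = 1)"

definition sd_isomorphic :: "nat \<Rightarrow> (nat \<Rightarrow> nat \<Rightarrow> int) \<Rightarrow> (nat \<Rightarrow> nat \<Rightarrow> int) \<Rightarrow> bool" where
  "sd_isomorphic N s t \<longleftrightarrow>
     (\<exists>f. bij_betw f {0..<N} {0..<N} \<and> (\<forall>u < N. \<forall>v < N. t (f u) (f v) = s u v))"

end

theory Submission
  imports Defs
begin

definition eps :: "nat \<Rightarrow> int" where "eps k = (if even k then 1 else -1)"
definition dl :: "nat \<Rightarrow> nat \<Rightarrow> int" where "dl i k = (if k < 2 + 2*i then -1 else 1)"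
definition GG :: "nat \<Rightarrow> nat \<Rightarrow> nat \<Rightarrow> nat \<Rightarrow> int" where
  "GG N i u v = (if u = 0 \<and> 2 \<le> v \<and> v < N then dl i v
     else if v = 1 \<and> 2 \<le> u \<and> u < N then eps u
     else if u = 1 \<and> v = 0 then 1 else 0)"

lemma sum_alt:
  assumes "\<forall>j. f (2*j+1) = - f (2*j)"
  shows "(\<Sum>k\<in>{2..<2*(m::nat)+2}. (f k :: complex)) = 0"
proof (induction m)
  case 0 then show ?case by simp
next
  case (Suc m)
  have e: "{2..<2*Suc m+2} = insert (2*m+3) (insert (2*m+2) {2..<2*m+2})" by auto
  have "f (2*m+3) = - f (2*m+2)" using assms[rule_format, of "m+1"] by (simp add: eval_nat_numeral)
  then show ?case unfolding e using Suc by simp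
qed

lemma adj_carrier: "adj_mat N s \<in> carrier_mat N N" by (simp add: adj_mat_def)

lemma row_eq:
  assumes "adj_mat N s *\<^sub>v v = l \<cdot>\<^sub>v v" "v \<in> carrier_vec N" "r < N"
  shows "(\<Sum>j<N. of_int (s r j) * v $ j) = l * v $ r"
proof -
  have "(adj_mat N s *\<^sub>v v) $ r = (l \<cdot>\<^sub>v v) $ r" using assms(1) by simp
  moreover have "(adj_mat N s *\<^sub>v v) $ r = (\<Sum>j<N. of_int (s r j) * v $ j)"
    using assms(2,3) by (simp add: adj_mat_def scalar_prod_def lessThan_atLeast0)
  ultimately show ?thesis using assms by simp
qed

lemma eig_zero:
  assumes N: "N = 2*m+2" "m \<ge> 1"
    and ev: "adj_mat N (GG N i) *\<^sub>v v = l \<cdot>\<^sub>v v" and vc: "v \<in> carrier_vec N" and l: "l \<noteq> 0"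
  shows "v = 0\<^sub>v N"
proof -
  have r1: "(\<Sum>j<N. of_int (GG N i 1 j) * v $ j) = l * v $ 1"
    using row_eq[OF ev vc] N by simp
  have "(\<Sum>j<N. of_int (GG N i 1 j) * v $ j) = (\<Sum>j<N. if j = 0 then v $ 0 else 0)"
    by (rule sum.cong) (auto simp: GG_def)
  also have "\<dots> = v $ 0" using N by simp
  finally have e1: "v $ 0 = l * v $ 1" using r1 by simp
  have ek: "v $ k = of_int (eps k) * v $ 1 / l" if "2 \<le> k" "k < N" for k
  proof -
    have rk: "(\<Sum>j<N. of_int (GG N i k j) * v $ j) = l * v $ k"
      using row_eq[OF ev vc that(2)] .
    have "(\<Sum>j<N. of_int (GG N i k j) * v $ j) = (\<Sum>j<N. if j = 1 then of_int (eps k) * v $ 1 else 0)"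
      by (rule sum.cong) (use that in \<open>auto simp: GG_def\<close>)
    also have "\<dots> = of_int (eps k) * v $ 1" using N by simp
    finally show ?thesis using rk l by (simp add: field_simps)
  qed
  have r0: "(\<Sum>j<N. of_int (GG N i 0 j) * v $ j) = l * v $ 0"
    using row_eq[OF ev vc] N by simp
  have "(\<Sum>j<N. of_int (GG N i 0 j) * v $ j) = (\<Sum>j\<in>{2..<N}. of_int (GG N i 0 j) * v $ j)"
    by (rule sum.mono_neutral_right) (auto simp: GG_def)
  also have "\<dots> = (\<Sum>j\<in>{2..<N}. (v $ 1 / l) * of_int (dl i j * eps j))"
    by (rule sum.cong) (auto simp: GG_def ek)
  also have "\<dots> = (v $ 1 / l) * (\<Sum>j\<in>{2..<N}. of_int (dl i j * eps j))"
    by (simp add: sum_distrib_left)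
  also have "(\<Sum>j\<in>{2..<N}. (of_int (dl i j * eps j) :: complex)) = 0"
    unfolding N(1) by (rule sum_alt) (auto simp: dl_def eps_def; presburger)
  finally have "l * v $ 0 = 0" using r0 by simp
  then have v0: "v $ 0 = 0" using l by simp
  then have v1: "v $ 1 = 0" using e1 l by simp
  show ?thesis
  proof (rule eq_vecI)
    fix k assume "k < dim_vec (0\<^sub>v N :: complex vec)"
    then have k: "k < N" by simp
    show "v $ k = 0\<^sub>v N $ k"
      using k v0 v1 ek[of k] by (cases "k < 2") (auto simp: less_2_cases_iff)
  qed (use vc in simp)
qed

lemma spec_GG:
  assumes N: "N = 2*m+2" "m \<ge> 1"
  shows "sd_spectrum N (GG N i) = replicate_mset N 0"
proof -
  let ?A = "adj_mat N (GG N i)"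
  let ?p = "char_poly ?A"
  have dm: "degree ?p = N \<and> coeff ?p N = 1" using degree_monic_char_poly[OF adj_carrier] .
  then have p0: "?p \<noteq> 0" by auto
  have "set_mset (proots ?p) \<subseteq> {0}"
  proof
    fix x assume "x \<in> set_mset (proots ?p)"
    then have "poly ?p x = 0" using p0 by simp
    then have "eigenvalue ?A x" using eigenvalue_root_char_poly[OF adj_carrier] by simp
    then obtain v where "eigenvector ?A v x" unfolding eigenvalue_def by blast
    then have "v \<in> carrier_vec N" "v \<noteq> 0\<^sub>v N" "?A *\<^sub>v v = x \<cdot>\<^sub>v v"
      unfolding eigenvector_def by (auto simp: adj_mat_def)
    then show "x \<in> {0}" using eig_zero[OF N] by blast
  qed
  from set_mset_subset_singletonD[OF this] have "proots ?p = replicate_mset (size (proots ?p)) 0" .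
  also have "size (proots ?p) = N" using size_proots_complex dm by simp
  finally show ?thesis unfolding sd_spectrum_def .
qed


definition negs :: "nat \<Rightarrow> (nat \<Rightarrow> nat \<Rightarrow> int) \<Rightarrow> (nat \<times> nat) set" where
  "negs N s = {(u,v). u < N \<and> v < N \<and> s u v = -1}"

lemma iso_card:
  assumes "sd_isomorphic N s t"
  shows "card (negs N s) = card (negs N t)"
proof -
  obtain f where b: "bij_betw f {0..<N} {0..<N}" and h: "\<forall>u < N. \<forall>v < N. t (f u) (f v) = s u v"
    using assms unfolding sd_isomorphic_def by blast
  let ?g = "\<lambda>(u,v). (f u, f v)"
  have inj: "inj_on f {0..<N}" using b bij_betw_def by blast
  have fi: "f u < N" if "u < N" for u using b that bij_betwE by fastforce
  have img: "?g ` negs N s = negs N t"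
  proof
    show "?g ` negs N s \<subseteq> negs N t" using h fi by (auto simp: negs_def)
  next
    show "negs N t \<subseteq> ?g ` negs N s"
    proof
      fix p assume p: "p \<in> negs N t"
      obtain x y where xy: "p = (x,y)" "x < N" "y < N" "t x y = -1" using p by (auto simp: negs_def)
      obtain u where u: "u < N" "f u = x" using b xy(2) by (metis atLeastLessThan_iff bij_betw_iff_bijections zero_le)
      obtain v where v: "v < N" "f v = y" using b xy(3) by (metis atLeastLessThan_iff bij_betw_iff_bijections zero_le)
      have "(u,v) \<in> negs N s" using u v xy h by (auto simp: negs_def)
      then show "p \<in> ?g ` negs N s" using u v xy by force
    qed
  qed
  have "inj_on ?g (negs N s)"
    using inj unfolding inj_on_def negs_def by auto
  then show ?thesis using img card_image by fastforce
qed

lemma negs_GG: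
  assumes "2 + 2*i \<le> N"
  shows "negs N (GG N i) = {(k,1) | k. 2 \<le> k \<and> k < N \<and> odd k} \<union> (\<lambda>k. (0,k)) ` {2..<2+2*i}"
  using assms by (auto simp: negs_def GG_def dl_def eps_def split: if_splits)

lemma card_negs_GG:
  assumes "2 + 2*i \<le> N"
  shows "card (negs N (GG N i)) = card {(k,1::nat) | k. 2 \<le> k \<and> k < N \<and> odd k} + 2*i"
proof -
  have fin: "finite {(k,1::nat) | k. 2 \<le> k \<and> k < N \<and> odd k}"
    by (rule finite_subset[of _ "{..<N} \<times> {1}"]) auto
  have c: "card ((\<lambda>k. (0::nat,k)) ` {2..<2+2*i}) = 2*i"
    by (subst card_image) (auto simp: inj_on_def)
  show ?thesis unfolding negs_GG[OF assms]
    by (subst card_Un_disjoint) (use fin c in auto)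
qed

lemma pow4: "2*n+3 \<le> 4^n + (2::nat)"
  by (induction n) auto

theorem theorem2p12:
  fixes n :: nat
  assumes "n \<ge> 4"
  shows "\<exists>G :: nat \<Rightarrow> (nat \<Rightarrow> nat \<Rightarrow> int).
           (\<forall>i < n. sidigraph (4 ^ n) (G i)
                     \<and> real_spectrum (4 ^ n) (G i)
                     \<and> strongly_connected (4 ^ n) (G i)
                     \<and> \<not> symmetric_sd (G i)
                     \<and> \<not> cycle_balanced (G i)) \<and>
           (\<forall>i < n. \<forall>j < n. cospectral (4 ^ n) (G i) (G j)) \<and>
           (\<forall>i < n. \<forall>j < n. i \<noteq> j \<longrightarrow> \<not> sd_isomorphic (4 ^ n) (G i) (G j))"
proof -
  define N where "N = (4::nat)^n"
  define m where "m = 2 * 4^(n-1) - (1::nat)"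
  have n4: "(4::nat)^n = 4 * 4^(n-1)" using assms by (metis Suc_pred' not_numeral_le_zero not_gr0 power_Suc)
  have pos: "(4::nat)^(n-1) \<ge> 1" by simp
  have Nm: "N = 2*m+2" unfolding N_def m_def using n4 pos by linarith
  have m1: "m \<ge> 1" unfolding m_def using pos by linarith
  have N4: "N \<ge> 4" using Nm m1 by simp
  have Nodd: "odd (N - 1)" using Nm by simp
  have Ni: "2 + 2*i \<le> N - 1" if "i < n" for i
  proof -
    have "2*n+3 \<le> N + 2" unfolding N_def by (rule pow4)
    then show ?thesis using that assms by linarith
  qed
  have spec: "sd_spectrum N (GG N i) = replicate_mset N 0" for i using spec_GG[OF Nm m1] .
  have props: "sidigraph N (GG N i) \<and> real_spectrum N (GG N i) \<and> strongly_connected N (GG N i)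
        \<and> \<not> symmetric_sd (GG N i) \<and> \<not> cycle_balanced (GG N i)" if i: "i < n" for i
  proof (intro conjI)
    show "sidigraph N (GG N i)" unfolding sidigraph_def GG_def dl_def eps_def using N4 by auto
    show "real_spectrum N (GG N i)" unfolding real_spectrum_def spec by simp
    show "strongly_connected N (GG N i)" unfolding strongly_connected_def
    proof (intro allI impI)
      fix u v assume u: "u < N" and v: "v < N"
      let ?R = "{(x, y). arc (GG N i) x y}"
      have a10: "(1,0) \<in> ?R" by (simp add: arc_def GG_def)
      have ak1: "(k,1) \<in> ?R" if "2 \<le> k" "k < N" for k using that by (simp add: arc_def GG_def eps_def)
      have a0k: "(0,k) \<in> ?R" if "2 \<le> k" "k < N" for k using that by (simp add: arc_def GG_def dl_def)
      have to0: "(u,0) \<in> ?R\<^sup>*"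
      proof (cases "u < 2")
        case True then show ?thesis using a10 by (auto simp: less_2_cases_iff)
      next
        case False then show ?thesis using a10 ak1[of u] u
          by (meson converse_rtrancl_into_rtrancl not_le_imp_less not_less r_into_rtrancl)
      qed
      have from0: "(0,v) \<in> ?R\<^sup>*"
      proof (cases "v < 2")
        case True
        have "(0,1) \<in> ?R\<^sup>*" proof -
          have "(0,2) \<in> ?R" "(2,1) \<in> ?R" using a0k[of 2] ak1[of 2] N4 by auto
          then show ?thesis by (meson converse_rtrancl_into_rtrancl r_into_rtrancl)
        qed
        then show ?thesis using True by (auto simp: less_2_cases_iff)
      next
        case False then show ?thesis using a0k[of v] v by auto
      qed
      show "(u, v) \<in> ?R\<^sup>*" using to0 from0 by (rule rtrancl_trans)
    qed
    show "\<not> symmetric_sd (GG N i)"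
    proof
      assume h: "symmetric_sd (GG N i)"
      have "arc (GG N i) 0 2" using N4 by (simp add: arc_def GG_def dl_def)
      moreover have "\<not> arc (GG N i) 2 0" by (simp add: arc_def GG_def)
      ultimately show False using h unfolding symmetric_sd_def by blast
    qed
    show "\<not> cycle_balanced (GG N i)" unfolding cycle_balanced_def
    proof
      assume h: "\<forall>c. dcycle (GG N i) c \<longrightarrow> cycle_sign (GG N i) c = 1"
      let ?c = "[0, N - 1, 1]"
      have d1: "dl i (N-1) = 1" using Ni[OF i] by (simp add: dl_def)
      have e1: "eps (N-1) = -1" using Nodd by (simp add: eps_def)
      have g1: "GG N i 0 (N-1) = 1" using N4 d1 by (simp add: GG_def)
      have g2: "GG N i (N-1) 1 = -1" using N4 e1 by (simp add: GG_def)
      have g3: "GG N i 1 0 = 1" by (simp add: GG_def)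
      have ar: "arc (GG N i) (?c ! j) (?c ! ((j + 1) mod length ?c))" if "j < length ?c" for j
      proof -
        have "j = 0 \<or> j = 1 \<or> j = 2" using that by auto
        then show ?thesis using g1 g2 g3 by (auto simp: arc_def)
      qed
      have "dcycle (GG N i) ?c" unfolding dcycle_def
        using N4 ar by auto
      moreover have "cycle_sign (GG N i) ?c = -1"
      proof -
        have "{..<length ?c} = {0,1,2}" by auto
        then show ?thesis unfolding cycle_sign_def using g1 g2 g3 by simp
      qed
      ultimately show False using h by fastforce
    qed
  qed
  show ?thesis
  proof (intro exI[of _ "GG N"] conjI allI impI)
    fix i assume "i < n"
    then show "sidigraph (4 ^ n) (GG N i)" "real_spectrum (4 ^ n) (GG N i)"
      "strongly_connected (4 ^ n) (GG N i)" "\<not> symmetric_sd (GG N i)" "\<not> cycle_balanced (GG N i)"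
      using props unfolding N_def by auto
  next
    fix i j assume "i < n" "j < n"
    show "cospectral (4 ^ n) (GG N i) (GG N j)" unfolding cospectral_def N_def[symmetric] spec ..
  next
    fix i j assume ij: "i < n" "j < n" "i \<noteq> j"
    show "\<not> sd_isomorphic (4 ^ n) (GG N i) (GG N j)"
    proof
      assume "sd_isomorphic (4 ^ n) (GG N i) (GG N j)"
      then have "card (negs N (GG N i)) = card (negs N (GG N j))" unfolding N_def[symmetric] by (rule iso_card)
      then show False using card_negs_GG[of i N] card_negs_GG[of j N] Ni[OF ij(1)] Ni[OF ij(2)] ij(3) by simp
    qed
  qed
qed

end
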